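(* There exists an absolute constant $c>0$ such that the following holds. Let $n\in\mathbb{N}$, let $0\le\alpha\le1$, and let $S\subseteq\mathbb{F}_2^n$ with $|S|\ge\alpha 2^n$. Then $\rho(S)\ge c\,\alpha^{1/2}n^{1/2}$.
   Context: For $x,y\in\mathbb{F}_2^n$, the Hamming distance is $d_H(x,y)=\#\{i:x_i\neq y_i\}$. A set $R\subseteq\mathbb{F}_2^n$ is called rainbow if the $\binom{|R|}{2}$ Hamming distances $d_H(x,y)$ over unordered pairs of distinct points $x,y\in R$ are pairwise distinct. $\rho(S)$ denotes the maximum size of a rainbow subset $R\subseteq S$. *)

theory Defs
  imports Complex_Main
begin

text \<open>A point of F_2^n is represented by its support, a subset of {..<n}.\<close>

definition cube :: "nat \<Rightarrow> nat set set" where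
  "cube n = Pow {..<n}"

definition hamming :: "nat set \<Rightarrow> nat set \<Rightarrow> nat" where
  "hamming x y = card ((x - y) \<union> (y - x))"

definition rainbow :: "nat set set \<Rightarrow> bool" where
  "rainbow R \<longleftrightarrow> (\<forall>x\<in>R. \<forall>y\<in>R. \<forall>u\<in>R. \<forall>v\<in>R.
     x \<noteq> y \<longrightarrow> u \<noteq> v \<longrightarrow> hamming x y = hamming u v \<longrightarrow>
       {x, y} = {u, v})"

definition rho :: "nat set set \<Rightarrow> nat" where
  "rho S = Max {card R | R. R \<subseteq> S \<and> rainbow R}"

end

theory Submission
  imports Defs "HOL-Computational_Algebra.Primes" "HOL-Real_Asymp.Real_Asymp"
begin

lemma Suc_div_ind: "Suc n div d = n div d + (if d dvd Suc n then 1 else 0)"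
  by (simp add: div_Suc dvd_eq_mod_eq_0)

lemma card_filter_sum: "finite A \<Longrightarrow> card {x\<in>A. P x} = (\<Sum>x\<in>A. if P x then 1 else (0::nat))"
  by (simp add: sum.If_cases Int_def conj_commute)

lemma mult_le_self:
  assumes p: "prime (p::nat)" and m: "m > 0"
  shows "multiplicity p m \<le> m"
proof -
  have "p ^ multiplicity p m dvd m" by (rule multiplicity_dvd)
  then have "p ^ multiplicity p m \<le> m" using m by (simp add: dvd_imp_le)
  moreover have "multiplicity p m < 2 ^ multiplicity p m" by (rule less_exp)
  moreover have "2 ^ multiplicity p m \<le> p ^ multiplicity p m"
    using prime_ge_2_nat[OF p] by (simp add: power_mono)
  ultimately show ?thesis by linarith
qed

lemma mult_card:
  assumes p: "prime (p::nat)" and m: "m > 0"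
  shows "multiplicity p m = card {i\<in>{1..m}. p^i dvd m}"
proof -
  have h: "\<And>n. p^n dvd m \<longleftrightarrow> n \<le> multiplicity p m"
  proof -
    have "p \<noteq> Suc 0" using p by (metis not_prime_1 One_nat_def)
    then show "\<And>n. p^n dvd m \<longleftrightarrow> n \<le> multiplicity p m"
      using power_dvd_iff_le_multiplicity[of m p] m by auto
  qed
  have "{i\<in>{1..m}. p^i dvd m} = {1..multiplicity p m}"
    using mult_le_self[OF p m] by (auto simp: h)
  then show ?thesis by simp
qed

lemma legendre:
  assumes p: "prime (p::nat)"
  shows "multiplicity p (fact n :: nat) = (\<Sum>i\<in>{1..n}. n div p^i)"
proof (induction n)
  case 0
  then show ?case by simp
next
  case (Suc n)
  have pp: "prime_elem p" using p by simp
  have "multiplicity p (fact (Suc n) :: nat) = multiplicity p (Suc n * fact n)"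
    by (simp add: fact_Suc)
  also have "\<dots> = multiplicity p (Suc n) + multiplicity p (fact n :: nat)"
    by (rule prime_elem_multiplicity_mult_distrib[OF pp]) auto
  also have "multiplicity p (Suc n) = card {i\<in>{1..Suc n}. p^i dvd Suc n}"
    by (rule mult_card[OF p]) simp
  also have "card {i\<in>{1..Suc n}. p^i dvd Suc n} = (\<Sum>i\<in>{1..Suc n}. (if p^i dvd Suc n then 1 else 0))"
    by (rule card_filter_sum) simp
  finally have e1: "multiplicity p (fact (Suc n) :: nat) = (\<Sum>i\<in>{1..Suc n}. (if p^i dvd Suc n then 1 else 0)) + (\<Sum>i\<in>{1..n}. n div p^i)"
    using Suc by simp
  have e2: "(\<Sum>i\<in>{1..n}. n div p^i) = (\<Sum>i\<in>{1..Suc n}. n div p^i)"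
  proof -
    have "n div p ^ Suc n = 0"
    proof -
      have "n < 2 ^ n" by (rule less_exp)
      also have "(2::nat) ^ n \<le> 2 ^ Suc n" by simp
      also have "\<dots> \<le> p ^ Suc n" using prime_ge_2_nat[OF p] by (intro power_mono) auto
      finally show ?thesis by simp
    qed
    then show ?thesis by simp
  qed
  have e3: "(\<Sum>i\<in>{1..Suc n}. if p ^ i dvd Suc n then 1 else 0) + (\<Sum>i\<in>{1..Suc n}. n div p ^ i)
      = (\<Sum>i\<in>{1..Suc n}. Suc n div p ^ i)"
    by (simp add: Suc_div_ind sum.distrib[symmetric] add.commute)
  show ?case using e1 e2 e3 by simp
qed

lemma div2_le: "(d::nat) > 0 \<Longrightarrow> (2*n) div d \<le> 2 * (n div d) + 1"
proof -
  assume d: "d > 0"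
  have h: "n mod d + d * (n div d) = n" by (rule mod_mult_div_eq)
  have "2*n = 2*(n mod d) + d * (2*(n div d))" 
    by (metis h add_mult_distrib2 mult.left_commute)
  then have "(2*n) div d = (2*(n mod d)) div d + 2*(n div d)"
    using d by simp
  moreover have "(2*(n mod d)) div d < 2"
    using d by (simp add: div_less_iff_less_mult)
  ultimately show ?thesis by simp
qed

lemma sum_extend_zero:
  assumes p: "prime (p::nat)" and "n \<le> N"
  shows "(\<Sum>i\<in>{1..n}. n div p^i) = (\<Sum>i\<in>{1..N}. n div p^i)"
proof -
  have z: "n div p^i = 0" if "i \<in> {1..N} - {1..n}" for i
  proof -
    from that have "n < i" by auto
    have "i < 2 ^ i" by (rule less_exp)
    also have "(2::nat) ^ i \<le> p ^ i" using prime_ge_2_nat[OF p] by (intro power_mono) auto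
    finally show ?thesis using \<open>n < i\<close> by simp
  qed
  show ?thesis
    by (rule sum.mono_neutral_left) (use assms z in auto)
qed

lemma binom_mult_le:
  assumes p: "prime (p::nat)"
  shows "multiplicity p ((2*n) choose n) \<le> card {i\<in>{1..2*n}. p^i \<le> 2*n}"
proof -
  have pp: "prime_elem p" using p by simp
  have "fact n * fact (2*n - n) * ((2*n) choose n) = (fact (2*n) :: nat)"
    by (rule binomial_fact_lemma) simp
  then have f: "fact (2*n) = ((2*n) choose n) * (fact n * fact n :: nat)" by (simp add: mult_ac)
  have "multiplicity p (fact (2*n) :: nat) = multiplicity p ((2*n) choose n) + multiplicity p (fact n * fact n :: nat)"
    unfolding f by (rule prime_elem_multiplicity_mult_distrib[OF pp]) auto
  also have "multiplicity p (fact n * fact n :: nat) = 2 * multiplicity p (fact n :: nat)"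
    using prime_elem_multiplicity_mult_distrib[OF pp, of "fact n" "fact n"] by simp
  finally have e: "(\<Sum>i\<in>{1..2*n}. (2*n) div p^i) = multiplicity p ((2*n) choose n) + 2 * (\<Sum>i\<in>{1..2*n}. n div p^i)"
    using legendre[OF p, of n] legendre[OF p, of "2*n"] sum_extend_zero[OF p, of n "2*n"] by simp
  have t: "(2*n) div p^i \<le> 2 * (n div p^i) + (if p^i \<le> 2*n then 1 else 0)" for i
  proof (cases "p^i \<le> 2*n")
    case True
    have "p^i > 0" using prime_gt_0_nat[OF p] by simp
    then have "(2*n) div p^i \<le> 2 * (n div p^i) + 1" by (rule div2_le)
    then show ?thesis using True by simp
  next
    case False
    then show ?thesis by simp
  qed
  have "(\<Sum>i\<in>{1..2*n}. (2*n) div p^i) \<le> (\<Sum>i\<in>{1..2*n}. 2 * (n div p^i) + (if p^i \<le> 2*n then 1 else 0))"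
    by (rule sum_mono) (rule t)
  also have "\<dots> = 2 * (\<Sum>i\<in>{1..2*n}. n div p^i) + (\<Sum>i\<in>{1..2*n}. if p^i \<le> 2*n then 1 else 0)"
    by (simp add: sum.distrib sum_distrib_left)
  also have "(\<Sum>i\<in>{1..2*n}. if p^i \<le> 2*n then 1 else 0) = card {i\<in>{1..2*n}. p^i \<le> 2*n}"
    by (rule card_filter_sum[symmetric]) simp
  finally show ?thesis using e by simp
qed

lemma pow_card_le:
  assumes p: "(p::nat) \<ge> 2" and N: "N \<ge> 1"
  shows "p ^ card {i\<in>{1..N}. p^i \<le> N} \<le> N"
proof (cases "{i\<in>{1..N}. p^i \<le> N} = {}")
  case True
  then have "card {i\<in>{1..N}. p^i \<le> N} = 0" unfolding True by simp
  then show ?thesis using N by (metis power_0)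
next
  case False
  let ?S = "{i\<in>{1..N}. p^i \<le> N}"
  define j where "j = Max ?S"
  have fin: "finite ?S" by simp
  have jS: "j \<in> ?S" unfolding j_def using Max_in[OF fin False] .
  have "?S \<subseteq> {1..j}" unfolding j_def using fin by auto
  then have "card ?S \<le> j" using card_mono[of "{1..j}" ?S] by simp
  then have "p ^ card ?S \<le> p ^ j" using p by (intro power_increasing) auto
  also have "\<dots> \<le> N" using jS by simp
  finally show ?thesis .
qed

lemma card_le_one_big:
  assumes p: "(p::nat) \<ge> 2" and big: "p * p > N"
  shows "card {i\<in>{1..N}. p^i \<le> N} \<le> 1"
proof -
  have "{i\<in>{1..N}. p^i \<le> N} \<subseteq> {1}"
  proof
    fix i assume i: "i \<in> {i\<in>{1..N}. p^i \<le> N}"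
    show "i \<in> {1}"
    proof (rule ccontr)
      assume "i \<notin> {1}"
      then have "i \<ge> 2" using i by auto
      then have "p^2 \<le> p^i" using p by (intro power_increasing) auto
      then show False using i big by (simp add: power2_eq_square)
    qed
  qed
  then have "card {i\<in>{1..N}. p^i \<le> N} \<le> card {1::nat}" by (intro card_mono) auto
  then show ?thesis by simp
qed

lemma prod_primes_dvd:
  assumes "finite P" "\<forall>p\<in>P. prime p \<and> p dvd (N::nat)"
  shows "\<Prod>P dvd N"
  using assms
proof (induction P rule: finite_induct)
  case empty
  then show ?case by simp
next
  case (insert q P)
  have q: "prime q" "q dvd N" using insert.prems by auto
  have IH: "\<Prod>P dvd N" using insert.IH insert.prems by auto
  have "\<not> q dvd \<Prod>P"
  proof
    assume "q dvd \<Prod>P"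
    then obtain p where "p \<in> P" "q dvd p"
      using prime_dvd_prod_iff[OF insert.hyps(1) q(1), of id] by auto
    then have "q = p" using primes_dvd_imp_eq[OF q(1)] insert.prems by auto
    then show False using \<open>p \<in> P\<close> insert.hyps(2) by simp
  qed
  then have "coprime q (\<Prod>P)" by (rule prime_imp_coprime[OF q(1)])
  then have "q * \<Prod>P dvd N" using q(2) IH by (intro divides_mult)
  then show ?case using insert.hyps by simp
qed

lemma binom_odd_le: "(2*m+1) choose m \<le> 4^m"
proof -
  have s: "((2*m+1) choose (m+1)) = ((2*m+1) choose m)"
    using binomial_symmetric[of m "2*m+1"] by simp
  have "((2*m+1) choose m) + ((2*m+1) choose (m+1)) = (\<Sum>k\<in>{m, m+1}. (2*m+1) choose k)"
    by simp
  also have "\<dots> \<le> (\<Sum>k\<le>2*m+1. (2*m+1) choose k)"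
    by (intro sum_mono2) auto
  also have "\<dots> = 2^(2*m+1)" by (rule choose_row_sum)
  finally have "2 * ((2*m+1) choose m) \<le> 2 * 4^m"
    using s by (simp add: power_mult)
  then show ?thesis by linarith
qed

lemma big_primes_dvd_binom:
  assumes p: "prime p" "m+1 < p" "p \<le> 2*m+1"
  shows "p dvd ((2*m+1) choose m)"
proof -
  have f: "fact m * fact (2*m+1 - m) * ((2*m+1) choose m) = (fact (2*m+1) :: nat)"
    by (rule binomial_fact_lemma) simp
  have "p dvd (fact (2*m+1) :: nat)" by (subst prime_dvd_fact_iff[OF p(1)]) (use p in simp)
  then have "p dvd fact m * fact (m+1) * ((2*m+1) choose m)" using f by simp
  moreover have "\<not> p dvd (fact m :: nat)" by (subst prime_dvd_fact_iff[OF p(1)]) (use p in simp)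
  moreover have "\<not> p dvd (fact (m+1) :: nat)" by (subst prime_dvd_fact_iff[OF p(1)]) (use p in simp)
  ultimately show ?thesis using prime_dvd_mult_iff[OF p(1)] by blast
qed

lemma primorial_le: "\<Prod>{p::nat. prime p \<and> p \<le> x} \<le> 4^x"
proof (induction x rule: less_induct)
  case (less x)
  consider "x \<le> 2" | "x > 2" "even x" | "x > 2" "odd x" by linarith
  then show ?case
  proof cases
    case 1
    have "{p::nat. prime p \<and> p \<le> x} \<subseteq> {2}"
    proof
      fix p assume "p \<in> {p::nat. prime p \<and> p \<le> x}"
      then have "prime p" "p \<le> x" by auto
      then have "p \<ge> 2" by (simp add: prime_ge_2_nat)
      then show "p \<in> {2}" using \<open>p \<le> x\<close> 1 by simp
    qed
    then have "{p::nat. prime p \<and> p \<le> x} = {} \<or> {p::nat. prime p \<and> p \<le> x} = {2}" by blast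
    then show ?thesis
    proof
      assume e0: "{p::nat. prime p \<and> p \<le> x} = {}"
      have "\<Prod>{p::nat. prime p \<and> p \<le> x} = 1" unfolding e0 by simp
      then show ?thesis by simp
    next
      assume e: "{p::nat. prime p \<and> p \<le> x} = {2}"
      then have "x \<ge> 2" by auto
      then have "(4::nat)^2 \<le> 4^x" by (intro power_increasing) auto
      then show ?thesis using e by simp
    qed
  next
    case 2
    have "{p::nat. prime p \<and> p \<le> x} = {p::nat. prime p \<and> p \<le> x - 1}"
    proof (intro set_eqI iffI)
      fix p assume "p \<in> {p::nat. prime p \<and> p \<le> x}"
      then have pp: "prime p" "p \<le> x" by auto
      have "p \<noteq> x"
      proof
        assume "p = x"
        then have "odd p" using prime_odd_nat[OF pp(1)] 2 by simp
        then show False using \<open>p = x\<close> 2 by simp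
      qed
      then show "p \<in> {p::nat. prime p \<and> p \<le> x - 1}" using pp by auto
    qed auto
    also have "\<Prod>\<dots> \<le> 4^(x-1)" using less.IH[of "x - 1"] 2 by simp
    also have "(4::nat)^(x-1) \<le> 4^x" by (intro power_increasing) auto
    finally show ?thesis .
  next
    case 3
    obtain m where m0: "x = 2*m+1" using 3 oddE by blast
    have m: "x = 2*m+1" "m \<ge> 1" using m0 3 by auto
    let ?P1 = "{p::nat. prime p \<and> p \<le> m+1}"
    let ?P2 = "{p::nat. prime p \<and> m+1 < p \<and> p \<le> 2*m+1}"
    have u: "{p::nat. prime p \<and> p \<le> x} = ?P1 \<union> ?P2" using m by auto
    have f1: "finite ?P1" by simp
    have f2: "finite ?P2" by simp
    have d: "?P1 \<inter> ?P2 = {}" by auto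
    have e: "\<Prod>{p::nat. prime p \<and> p \<le> x} = \<Prod>?P1 * \<Prod>?P2"
      unfolding u by (rule prod.union_disjoint[OF f1 f2 d])
    have b1: "\<Prod>?P1 \<le> 4^(m+1)" using less.IH[of "m+1"] m by simp
    have b2: "\<Prod>?P2 \<le> 4^m"
    proof -
      have "\<Prod>?P2 dvd ((2*m+1) choose m)"
        by (rule prod_primes_dvd[OF f2]) (use big_primes_dvd_binom in blast)
      then have "\<Prod>?P2 \<le> ((2*m+1) choose m)"
        by (rule dvd_imp_le) simp
      also have "\<dots> \<le> 4^m" by (rule binom_odd_le)
      finally show ?thesis .
    qed
    have "\<Prod>{p::nat. prime p \<and> p \<le> x} \<le> 4^(m+1) * 4^m"
      unfolding e using b1 b2 by (rule mult_le_mono)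
    also have "(4::nat)^(m+1) * 4^m = 4^x" using m by (simp add: power_add[symmetric])
    finally show ?thesis .
  qed
qed

lemma pf_pow_le:
  assumes "n \<ge> 1" "p \<in> prime_factors ((2*n) choose n)"
  shows "p ^ multiplicity p ((2*n) choose n) \<le> 2*n"
proof -
  have p: "prime p" using assms(2) by (simp add: in_prime_factors_iff)
  have "p ^ multiplicity p ((2*n) choose n) \<le> p ^ card {i\<in>{1..2*n}. p^i \<le> 2*n}"
    using binom_mult_le[OF p, of n] prime_ge_2_nat[OF p] by (intro power_increasing) auto
  also have "\<dots> \<le> 2*n" using pow_card_le[of p "2*n"] prime_ge_2_nat[OF p] assms(1) by simp
  finally show ?thesis .
qed

lemma pf_le_2n:
  assumes "p \<in> prime_factors ((2*n) choose n)"
  shows "p \<le> 2*n"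
proof -
  have p: "prime p" "p dvd ((2*n) choose n)" using assms by (auto simp: in_prime_factors_iff)
  have "fact n * fact (2*n - n) * ((2*n) choose n) = (fact (2*n) :: nat)"
    by (rule binomial_fact_lemma) simp
  then have "((2*n) choose n) dvd (fact (2*n) :: nat)" by (metis dvd_triv_right)
  then have "p dvd (fact (2*n) :: nat)" using p(2) by (rule dvd_trans[rotated])
  then show ?thesis using prime_dvd_fact_iff[OF p(1)] by simp
qed

lemma erdos_bound:
  assumes n: "n \<ge> 1" and no: "\<not> (\<exists>p. prime p \<and> n < 2*p \<and> p \<le> 2*n)"
  shows "real ((2*n) choose n) \<le> (2*real n) powr sqrt (2*real n) * 2^n"
proof -
  define C where "C = (2*n) choose n"
  define v where "v = (\<lambda>p. multiplicity p C)"
  define PF where "PF = prime_factors C"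
  define PF1 where "PF1 = {p\<in>PF. p*p \<le> 2*n}"
  define PF2 where "PF2 = {p\<in>PF. \<not> p*p \<le> 2*n}"
  have Cpos: "C > 0" unfolding C_def by simp
  have fin: "finite PF1" "finite PF2" unfolding PF1_def PF2_def PF_def by auto
  have u: "PF = PF1 \<union> PF2" "PF1 \<inter> PF2 = {}" unfolding PF1_def PF2_def by auto
  have "C = (\<Prod>p\<in>PF. p ^ v p)" unfolding PF_def v_def using prime_factorization_nat[OF Cpos] .
  also have "\<dots> = (\<Prod>p\<in>PF1. p ^ v p) * (\<Prod>p\<in>PF2. p ^ v p)"
    unfolding u(1) by (rule prod.union_disjoint[OF fin u(2)])
  finally have Ceq: "C = (\<Prod>p\<in>PF1. p ^ v p) * (\<Prod>p\<in>PF2. p ^ v p)" .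
  have b1: "(\<Prod>p\<in>PF1. p ^ v p) \<le> (\<Prod>p\<in>PF1. 2*n)"
    by (rule prod_mono) (use pf_pow_le[OF n] in \<open>auto simp: PF1_def PF_def v_def C_def\<close>)
  have cardPF1: "real (card PF1) \<le> sqrt (2*real n)"
  proof -
    define k where "k = nat \<lfloor>sqrt (2*real n)\<rfloor>"
    have "PF1 \<subseteq> {1..k}"
    proof
      fix p assume "p \<in> PF1"
      then have pp: "prime p" "p*p \<le> 2*n" unfolding PF1_def PF_def by (auto simp: in_prime_factors_iff)
      have "real p * real p \<le> 2 * real n" using pp(2) by (metis of_nat_le_iff of_nat_mult of_nat_numeral)
      then have "real p \<le> sqrt (2*real n)" by (metis real_le_rsqrt power2_eq_square)
      then have "p \<le> k" unfolding k_def by (metis le_nat_floor of_nat_le_iff floor_of_nat nat_int le_floor_iff)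
      then show "p \<in> {1..k}" using prime_ge_1_nat[OF pp(1)] by simp
    qed
    then have "card PF1 \<le> k" using card_mono[of "{1..k}" PF1] by simp
    moreover have "real k \<le> sqrt (2*real n)" unfolding k_def by simp
    ultimately show ?thesis by linarith
  qed
  have r1: "real (\<Prod>p\<in>PF1. p ^ v p) \<le> (2*real n) powr sqrt (2*real n)"
  proof -
    have "real (\<Prod>p\<in>PF1. p ^ v p) \<le> real (\<Prod>p\<in>PF1. 2*n)" using b1 by linarith
    also have "\<dots> = (2*real n) ^ card PF1" by simp
    also have "\<dots> = (2*real n) powr real (card PF1)" using n by (simp add: powr_realpow)
    also have "\<dots> \<le> (2*real n) powr sqrt (2*real n)"
      by (rule powr_mono[OF cardPF1]) (use n in simp)
    finally show ?thesis .
  qed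
  have b2: "(\<Prod>p\<in>PF2. p ^ v p) \<le> (\<Prod>p\<in>PF2. p)"
  proof (rule prod_mono)
    fix p assume "p \<in> PF2"
    then have pp: "prime p" "\<not> p*p \<le> 2*n" "p \<in> prime_factors ((2*n) choose n)"
      unfolding PF2_def PF_def C_def by (auto simp: in_prime_factors_iff)
    have "v p \<le> card {i\<in>{1..2*n}. p^i \<le> 2*n}" unfolding v_def C_def by (rule binom_mult_le[OF pp(1)])
    also have "\<dots> \<le> 1" using card_le_one_big[of p "2*n"] prime_ge_2_nat[OF pp(1)] pp(2) by simp
    finally have "v p \<le> 1" .
    then have "p ^ v p \<le> p ^ 1" using prime_ge_1_nat[OF pp(1)] by (intro power_increasing) auto
    then show "0 \<le> p ^ v p \<and> p ^ v p \<le> p" by simp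
  qed
  have sub: "PF2 \<subseteq> {p. prime p \<and> p \<le> n div 2}"
  proof
    fix p assume "p \<in> PF2"
    then have pp: "prime p" "p \<in> prime_factors ((2*n) choose n)"
      unfolding PF2_def PF_def C_def by (auto simp: in_prime_factors_iff)
    have "p \<le> 2*n" by (rule pf_le_2n[OF pp(2)])
    then have "\<not> n < 2*p" using no pp(1) by blast
    then show "p \<in> {p. prime p \<and> p \<le> n div 2}" using pp(1) by auto
  qed
  have "(\<Prod>p\<in>PF2. p) dvd \<Prod>{p. prime p \<and> p \<le> n div 2}"
    by (rule prod_dvd_prod_subset[OF _ sub]) simp
  then have "(\<Prod>p\<in>PF2. p) \<le> \<Prod>{p. prime p \<and> p \<le> n div 2}"
    by (rule dvd_imp_le) (auto intro!: prod_pos simp: prime_gt_0_nat)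
  also have "\<dots> \<le> 4 ^ (n div 2)" by (rule primorial_le)
  also have "(4::nat) ^ (n div 2) = 2 ^ (2 * (n div 2))" by (simp add: power_mult)
  also have "(2::nat) ^ (2 * (n div 2)) \<le> 2 ^ n" by (intro power_increasing) auto
  finally have b2': "(\<Prod>p\<in>PF2. p ^ v p) \<le> 2^n" using b2 by linarith
  have "real C = real (\<Prod>p\<in>PF1. p ^ v p) * real (\<Prod>p\<in>PF2. p ^ v p)"
    using Ceq by (metis of_nat_mult)
  also have "\<dots> \<le> (2*real n) powr sqrt (2*real n) * 2^n"
  proof (rule mult_mono[OF r1])
    show "real (\<Prod>p\<in>PF2. p ^ v p) \<le> 2^n" using b2' by (metis of_nat_le_iff of_nat_numeral of_nat_power)
  qed (auto intro!: prod_nonneg)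
  finally show ?thesis unfolding C_def .
qed

lemma erdos_exists: "\<exists>N0::nat. \<forall>n\<ge>N0. \<exists>p. prime p \<and> n < 2*p \<and> p \<le> 2*n"
proof -
  have ev: "eventually (\<lambda>n::nat. 2 * real n * (2 * real n) powr sqrt (2 * real n) < 2 ^ n) at_top"
    by real_asymp
  then obtain N where N: "\<forall>n\<ge>N. 2 * real n * (2 * real n) powr sqrt (2 * real n) < 2 ^ n"
    by (auto simp: eventually_at_top_linorder)
  show ?thesis
  proof (rule exI[of _ "max N 1"], intro allI impI)
    fix n assume nN: "max N 1 \<le> n"
    show "\<exists>p. prime p \<and> n < 2*p \<and> p \<le> 2*n"
    proof (rule ccontr)
      assume no: "\<not> (\<exists>p. prime p \<and> n < 2*p \<and> p \<le> 2*n)"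
      have n1: "n \<ge> 1" using nN by simp
      have "4^n / (2*real n) \<le> real ((2*n) choose n)"
        using central_binomial_lower_bound[of n] n1 by simp
      also have "\<dots> \<le> (2*real n) powr sqrt (2*real n) * 2^n" by (rule erdos_bound[OF n1 no])
      finally have h: "4^n / (2*real n) \<le> (2*real n) powr sqrt (2*real n) * 2^n" .
      have pos: "2 * real n > 0" using n1 by simp
      have "(4::real)^n = 2^n * 2^n" by (simp add: power_mult_distrib[symmetric])
      then have "2^n * 2^n \<le> (2*real n) * ((2*real n) powr sqrt (2*real n) * 2^n)"
        using h pos by (simp add: divide_le_eq mult_ac)
      then have "2^n \<le> 2 * real n * (2 * real n) powr sqrt (2 * real n)"
        by (simp add: mult_ac)
      moreover have "2 * real n * (2 * real n) powr sqrt (2 * real n) < 2 ^ n" using N nN by simp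
      ultimately show False by linarith
    qed
  qed
qed

lemma prime_in_range: "\<exists>C::nat. C \<ge> 1 \<and> (\<forall>x\<ge>1. \<exists>p. prime p \<and> x \<le> p \<and> p \<le> C*x)"
proof -
  obtain N0 :: nat where N0: "\<forall>n\<ge>N0. \<exists>p. prime p \<and> n < 2*p \<and> p \<le> 2*n" using erdos_exists by blast
  obtain q where q: "prime q" "q > N0" using bigger_prime[of N0] by blast
  show ?thesis
  proof (rule exI[of _ "4+q"], intro conjI allI impI)
    show "4 + q \<ge> 1" by simp
    fix x :: nat assume x: "x \<ge> 1"
    show "\<exists>p. prime p \<and> x \<le> p \<and> p \<le> (4+q)*x"
    proof (cases "x \<ge> N0")
      case True
      then have "2*x \<ge> N0" by simp
      then obtain p where p: "prime p" "2*x < 2*p" "p \<le> 2*(2*x)" using N0 by blast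
      have "p \<le> (4+q)*x" using p(3) by (simp add: algebra_simps)
      then show ?thesis using p by auto
    next
      case False
      have "q \<le> (4+q)*x" using x by (metis le_add2 mult_le_mono mult_1_right)
      then show ?thesis using q False by (intro exI[of _ q]) auto
    qed
  qed
qed

definition sidon :: "nat set \<Rightarrow> bool" where
  "sidon T \<longleftrightarrow> (\<forall>a\<in>T. \<forall>b\<in>T. \<forall>c\<in>T. \<forall>d\<in>T. a + b = c + d \<longrightarrow> {a,b} = {c,d})"

definition ET :: "nat \<Rightarrow> nat set" where
  "ET p = (\<lambda>k. 2*p*k + (k^2 mod p)) ` {..<p}"

lemma divmod_unique2:
  fixes M a b r s :: nat
  assumes "M*a + r = M*b + s" "r < M" "s < M"
  shows "a = b \<and> r = s"
proof -
  have "(M*a + r) div M = a" using assms(2) by simp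
  moreover have "(M*b + s) div M = b" using assms(3) by simp
  ultimately have "a = b" using assms(1) by simp
  then show ?thesis using assms(1) by simp
qed

lemma small_dvd_zero:
  fixes d :: int and p :: nat
  assumes "int p dvd d" "\<bar>d\<bar> < int p"
  shows "d = 0"
proof (rule ccontr)
  assume "d \<noteq> 0"
  from assms(1) obtain q where q: "d = int p * q" by (auto elim: dvdE)
  with \<open>d \<noteq> 0\<close> have "q \<noteq> 0" by auto
  then have "\<bar>q\<bar> \<ge> 1" by simp
  then have "\<bar>d\<bar> \<ge> int p" unfolding q by (simp add: abs_mult mult_le_cancel_left1)
  then show False using assms(2) by simp
qed

lemma et_key:
  fixes p k1 k2 k3 k4 :: nat
  assumes p: "prime p" "p > 2" and k: "k1 < p" "k2 < p" "k3 < p" "k4 < p"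
    and s: "k1 + k2 = k3 + k4"
    and m: "(k1^2 + k2^2) mod p = (k3^2 + k4^2) mod p"
  shows "(k1 = k3 \<and> k2 = k4) \<or> (k1 = k4 \<and> k2 = k3)"
proof -
  have "int ((k1^2 + k2^2) mod p) = int ((k3^2+k4^2) mod p)" using m by simp
  then have "(int k1^2 + int k2^2) mod int p = (int k3^2 + int k4^2) mod int p"
    by (simp add: zmod_int)
  then have "int p dvd (int k1^2 + int k2^2) - (int k3^2 + int k4^2)"
    by (simp add: mod_eq_dvd_iff)
  moreover have "int k4 = int k1 + int k2 - int k3" using s by simp
  ultimately have "int p dvd 2 * ((int k1 - int k3) * (int k3 - int k2))"
    by (simp add: algebra_simps power2_eq_square)
  moreover have "\<not> int p dvd 2"
  proof
    assume "int p dvd 2"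
    then have "p dvd 2" by presburger
    then have "p \<le> 2" by (simp add: dvd_imp_le)
    then show False using p by simp
  qed
  moreover have pr: "prime (int p)" using p by simp
  ultimately have "int p dvd (int k1 - int k3) \<or> int p dvd (int k3 - int k2)"
    by (simp add: prime_dvd_mult_iff)
  then show ?thesis
  proof
    assume "int p dvd (int k1 - int k3)"
    then have "int k1 - int k3 = 0" by (rule small_dvd_zero) (use k in auto)
    then show ?thesis using s by auto
  next
    assume "int p dvd (int k3 - int k2)"
    then have "int k3 - int k2 = 0" by (rule small_dvd_zero) (use k in auto)
    then show ?thesis using s by auto
  qed
qed

lemma et_sidon:
  assumes p: "prime p" "p > 2"
  shows "sidon (ET p)"
  unfolding sidon_def
proof (intro ballI impI)
  fix a b c d assume abcd: "a \<in> ET p" "b \<in> ET p" "c \<in> ET p" "d \<in> ET p" and e: "a + b = c + d"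
  obtain k1 where k1: "k1 < p" "a = 2*p*k1 + (k1^2 mod p)" using abcd(1) unfolding ET_def by auto
  obtain k2 where k2: "k2 < p" "b = 2*p*k2 + (k2^2 mod p)" using abcd(2) unfolding ET_def by auto
  obtain k3 where k3: "k3 < p" "c = 2*p*k3 + (k3^2 mod p)" using abcd(3) unfolding ET_def by auto
  obtain k4 where k4: "k4 < p" "d = 2*p*k4 + (k4^2 mod p)" using abcd(4) unfolding ET_def by auto
  have pp: "p > 0" using p by simp
  have "(2*p)*(k1+k2) + ((k1^2 mod p) + (k2^2 mod p)) = (2*p)*(k3+k4) + ((k3^2 mod p) + (k4^2 mod p))"
    using e k1 k2 k3 k4 by (simp add: algebra_simps)
  moreover have "(k1^2 mod p) + (k2^2 mod p) < 2*p"
  proof -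
    have "k1^2 mod p < p" "k2^2 mod p < p" using pp by simp_all
    then show ?thesis by linarith
  qed
  moreover have "(k3^2 mod p) + (k4^2 mod p) < 2*p"
  proof -
    have "k3^2 mod p < p" "k4^2 mod p < p" using pp by simp_all
    then show ?thesis by linarith
  qed
  ultimately have s: "k1 + k2 = k3 + k4" and f: "(k1^2 mod p) + (k2^2 mod p) = (k3^2 mod p) + (k4^2 mod p)"
    using divmod_unique2 by blast+
  have m: "(k1^2 + k2^2) mod p = (k3^2 + k4^2) mod p"
    by (metis f mod_add_eq)
  from et_key[OF p k1(1) k2(1) k3(1) k4(1) s m]
  show "{a, b} = {c, d}" using k1 k2 k3 k4 by auto
qed

lemma et_card:
  assumes "p > 0"
  shows "card (ET p) = p"
proof -
  have "inj_on (\<lambda>k. 2*p*k + (k^2 mod p)) {..<p}"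
  proof (rule inj_onI)
    fix x y assume "x \<in> {..<p}" "y \<in> {..<p}" "2*p*x + (x^2 mod p) = 2*p*y + (y^2 mod p)"
    moreover have "x^2 mod p < p" "y^2 mod p < p" using assms by simp_all
    then have "x^2 mod p < 2*p" "y^2 mod p < 2*p" by linarith+
    ultimately show "x = y" using divmod_unique2[of "2*p" x "x^2 mod p" y "y^2 mod p"] by simp
  qed
  then show ?thesis unfolding ET_def by (simp add: card_image)
qed

lemma et_bound:
  assumes "t \<in> ET p"
  shows "t < 2*p*p"
proof -
  obtain k where k: "k < p" "t = 2*p*k + (k^2 mod p)" using assms unfolding ET_def by auto
  have "p > 0" using k by simp
  then have "k^2 mod p < p" by simp
  moreover have "2*p*k + p \<le> 2*p*p"
  proof -
    have "2*p*(k+1) \<le> 2*p*p" using k(1) by (intro mult_le_mono2) simp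
    then show ?thesis by (simp add: algebra_simps)
  qed
  ultimately show ?thesis using k by linarith
qed

lemma swap3:
  "(\<Sum>l\<in>X. \<Sum>u\<in>Y. \<Sum>a\<in>Z. (g l u a :: real)) = (\<Sum>a\<in>Z. \<Sum>l\<in>X. \<Sum>u\<in>Y. g l u a)"
proof -
  have "(\<Sum>l\<in>X. \<Sum>u\<in>Y. \<Sum>a\<in>Z. g l u a) = (\<Sum>l\<in>X. \<Sum>a\<in>Z. \<Sum>u\<in>Y. g l u a)"
    by (rule sum.cong[OF refl]) (rule sum.swap)
  also have "\<dots> = (\<Sum>a\<in>Z. \<Sum>l\<in>X. \<Sum>u\<in>Y. g l u a)" by (rule sum.swap)
  finally show ?thesis .
qed

lemma swap4:
  "(\<Sum>l\<in>X. \<Sum>u\<in>Y. \<Sum>a\<in>Z. \<Sum>b\<in>B a. (g l u a b :: real)) = (\<Sum>a\<in>Z. \<Sum>b\<in>B a. \<Sum>l\<in>X. \<Sum>u\<in>Y. g l u a b)"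
proof -
  have "(\<Sum>l\<in>X. \<Sum>u\<in>Y. \<Sum>a\<in>Z. \<Sum>b\<in>B a. g l u a b) = (\<Sum>a\<in>Z. \<Sum>l\<in>X. \<Sum>u\<in>Y. \<Sum>b\<in>B a. g l u a b)"
    by (rule swap3)
  also have "\<dots> = (\<Sum>a\<in>Z. \<Sum>b\<in>B a. \<Sum>l\<in>X. \<Sum>u\<in>Y. g l u a b)"
    by (rule sum.cong[OF refl]) (rule swap3)
  finally show ?thesis .
qed

lemma hit_ineq:
  assumes "finite A"
  shows "(2::real) * of_bool (\<exists>a\<in>A. P a) \<ge> 2 * (\<Sum>a\<in>A. of_bool (P a)) - (\<Sum>a\<in>A. \<Sum>b\<in>A-{a}. of_bool (P a) * of_bool (P b))"
proof -
  define N :: real where "N = (\<Sum>a\<in>A. of_bool (P a))"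
  have inner: "(\<Sum>b\<in>A-{a}. (of_bool (P a) * of_bool (P b) :: real)) = of_bool (P a) * (N - of_bool (P a))" if "a \<in> A" for a
  proof -
    have "(\<Sum>b\<in>A-{a}. (of_bool (P a) * of_bool (P b) :: real)) = of_bool (P a) * (\<Sum>b\<in>A-{a}. of_bool (P b))"
      by (simp only: sum_distrib_left)
    also have "(\<Sum>b\<in>A-{a}. (of_bool (P b) :: real)) = N - of_bool (P a)"
      unfolding N_def using sum_diff1[OF assms, of "\<lambda>b. (of_bool (P b) :: real)" a] that by simp
    finally show ?thesis .
  qed
  have "(\<Sum>a\<in>A. \<Sum>b\<in>A-{a}. (of_bool (P a) * of_bool (P b) :: real)) = (\<Sum>a\<in>A. of_bool (P a) * (N - of_bool (P a)))"
    by (rule sum.cong[OF refl]) (rule inner)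
  also have "\<dots> = (\<Sum>a\<in>A. of_bool (P a) * N - of_bool (P a))"
    by (rule sum.cong[OF refl]) (simp add: algebra_simps)
  also have "\<dots> = N * N - N" unfolding N_def by (simp add: sum_subtractf sum_distrib_right[symmetric])
  finally have pe: "(\<Sum>a\<in>A. \<Sum>b\<in>A-{a}. (of_bool (P a) * of_bool (P b) :: real)) = N * N - N" .
  define k where "k = card (A \<inter> {a. P a})"
  have Nk: "N = real k" unfolding N_def k_def using assms by simp
  have ex: "(\<exists>a\<in>A. P a) \<longleftrightarrow> k \<ge> 1"
  proof -
    have "(\<exists>a\<in>A. P a) \<longleftrightarrow> A \<inter> {a. P a} \<noteq> {}" by auto
    also have "\<dots> \<longleftrightarrow> k \<noteq> 0" unfolding k_def using assms by simp
    finally show ?thesis by linarith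
  qed
  have "2 * of_bool (k \<ge> 1) \<ge> 3 * real k - real k * real k"
  proof (cases "k \<le> 2")
    case True
    then have "k = 0 \<or> k = 1 \<or> k = 2" by auto
    then show ?thesis by auto
  next
    case False
    then have "real k \<ge> 3" by simp
    then have "3 * real k \<le> real k * real k" by (intro mult_right_mono) auto
    then show ?thesis by simp
  qed
  then show ?thesis using pe Nk ex by (simp add: N_def[symmetric])
qed

context
  fixes A T :: "nat set" and Q L W :: nat
  assumes finA: "finite A" and finT: "finite T" and sT: "sidon T"
    and TL: "\<forall>t\<in>T. t < L" and Qp: "prime Q" and AQ: "\<forall>a\<in>A. a < Q"
    and W1: "W \<ge> 1" and LW: "6*L*W \<le> Q"
begin

definition rr :: "nat \<Rightarrow> nat \<Rightarrow> nat \<Rightarrow> nat" where "rr l u a = (l*a+u) mod Q"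
definition bin :: "nat \<Rightarrow> nat set" where "bin t = {3*t*W ..< 3*t*W + W}"
definition HH :: "nat \<Rightarrow> nat \<Rightarrow> nat set" where "HH l u = {t\<in>T. \<exists>a\<in>A. rr l u a \<in> bin t}"

lemma bin_div:
  assumes "x \<in> bin t"
  shows "x div (3*W) = t \<and> x mod (3*W) < W"
proof -
  have h: "3*t*W \<le> x" "x < 3*t*W + W" using assms unfolding bin_def by auto
  define e where "e = x - 3*t*W"
  have e0: "x = 3*t*W + e" "e < W" using h unfolding e_def by linarith+
  have e: "x = 3*W*t + e" "e < W" using e0 by (simp_all add: mult_ac)
  have W0: "3*W > 0" using W1 by simp
  have "e < 3*W" using e(2) by simp
  then have "x div (3*W) = t" "x mod (3*W) = e" using e(1) W0 by simp_all
  then show ?thesis using e(2) by simp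
qed

lemma bin_lt:
  assumes "t \<in> T" "x \<in> bin t"
  shows "2*x < Q"
proof -
  have "t + 1 \<le> L" using TL assms(1) by auto
  then have "3*W*(t+1) \<le> 3*W*L" by (intro mult_le_mono2)
  moreover have "x < 3*t*W + W" using assms(2) unfolding bin_def by simp
  ultimately have "x < 3*W*L" by (simp add: algebra_simps)
  then have "2*x < 6*L*W" by (simp add: algebra_simps)
  then show ?thesis using LW by linarith
qed

lemma select: "\<exists>B\<subseteq>A. sidon B \<and> card B = card (HH l u)"
proof -
  define g where "g t = (SOME a. a \<in> A \<and> rr l u a \<in> bin t)" for t
  have g: "g t \<in> A \<and> rr l u (g t) \<in> bin t" if "t \<in> HH l u" for t
  proof -
    from that have "\<exists>a. a \<in> A \<and> rr l u a \<in> bin t" unfolding HH_def by auto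
    then show ?thesis unfolding g_def by (rule someI_ex)
  qed
  have inj: "inj_on g (HH l u)"
  proof (rule inj_onI)
    fix t1 t2 assume t: "t1 \<in> HH l u" "t2 \<in> HH l u" "g t1 = g t2"
    have "rr l u (g t1) div (3*W) = t1" using bin_div g[OF t(1)] by blast
    moreover have "rr l u (g t2) div (3*W) = t2" using bin_div g[OF t(2)] by blast
    ultimately show "t1 = t2" using t(3) by metis
  qed
  have sub: "g ` HH l u \<subseteq> A"
  proof
    fix x assume "x \<in> g ` HH l u"
    then obtain t where "t \<in> HH l u" "x = g t" by blast
    then show "x \<in> A" using g by blast
  qed
  have HT: "HH l u \<subseteq> T" unfolding HH_def by blast
  have sid: "sidon (g ` HH l u)"
    unfolding sidon_def
  proof (intro ballI impI)
    fix a b c d assume abcd: "a \<in> g ` HH l u" "b \<in> g ` HH l u" "c \<in> g ` HH l u" "d \<in> g ` HH l u"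
      and e: "a + b = c + d"
    obtain ta where ta: "ta \<in> HH l u" "a = g ta" using abcd(1) by auto
    obtain tb where tb: "tb \<in> HH l u" "b = g tb" using abcd(2) by auto
    obtain tc where tc: "tc \<in> HH l u" "c = g tc" using abcd(3) by auto
    obtain td where td: "td \<in> HH l u" "d = g td" using abcd(4) by auto
    define ra rb rc rd where "ra = rr l u a" "rb = rr l u b" "rc = rr l u c" "rd = rr l u d"
    have ina: "ra \<in> bin ta" using g[OF ta(1)] ta(2) ra_rb_rc_rd_def by simp
    have inb: "rb \<in> bin tb" using g[OF tb(1)] tb(2) ra_rb_rc_rd_def by simp
    have inc: "rc \<in> bin tc" using g[OF tc(1)] tc(2) ra_rb_rc_rd_def by simp
    have ind: "rd \<in> bin td" using g[OF td(1)] td(2) ra_rb_rc_rd_def by simp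
    have "(ra + rb) mod Q = ((l*a+u) + (l*b+u)) mod Q"
      unfolding ra_rb_rc_rd_def rr_def by (simp add: mod_add_eq)
    also have "(l*a+u) + (l*b+u) = (l*c+u) + (l*d+u)"
    proof -
      have "l*a + l*b = l*c + l*d" using e by (metis add_mult_distrib2)
      then show ?thesis by simp
    qed
    also have "((l*c+u) + (l*d+u)) mod Q = (rc + rd) mod Q"
      unfolding ra_rb_rc_rd_def rr_def by (simp add: mod_add_eq)
    finally have m: "(ra + rb) mod Q = (rc + rd) mod Q" .
    have "2*ra < Q" "2*rb < Q" "2*rc < Q" "2*rd < Q"
      using bin_lt ina inb inc ind ta(1) tb(1) tc(1) td(1) HT by blast+
    then have "ra + rb < Q" "rc + rd < Q" by linarith+
    then have s: "ra + rb = rc + rd" using m by simp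
    have da: "ra = 3*W*ta + ra mod (3*W)" "ra mod (3*W) < W"
    proof -
      have "ra = 3*W*(ra div (3*W)) + ra mod (3*W)" by simp
      then show "ra = 3*W*ta + ra mod (3*W)" using bin_div[OF ina] by simp
      show "ra mod (3*W) < W" using bin_div[OF ina] by simp
    qed
    have db: "rb = 3*W*tb + rb mod (3*W)" "rb mod (3*W) < W"
    proof -
      have "rb = 3*W*(rb div (3*W)) + rb mod (3*W)" by simp
      then show "rb = 3*W*tb + rb mod (3*W)" using bin_div[OF inb] by simp
      show "rb mod (3*W) < W" using bin_div[OF inb] by simp
    qed
    have dc: "rc = 3*W*tc + rc mod (3*W)" "rc mod (3*W) < W"
    proof -
      have "rc = 3*W*(rc div (3*W)) + rc mod (3*W)" by simp
      then show "rc = 3*W*tc + rc mod (3*W)" using bin_div[OF inc] by simp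
      show "rc mod (3*W) < W" using bin_div[OF inc] by simp
    qed
    have dd: "rd = 3*W*td + rd mod (3*W)" "rd mod (3*W) < W"
    proof -
      have "rd = 3*W*(rd div (3*W)) + rd mod (3*W)" by simp
      then show "rd = 3*W*td + rd mod (3*W)" using bin_div[OF ind] by simp
      show "rd mod (3*W) < W" using bin_div[OF ind] by simp
    qed
    have "(3*W)*(ta+tb) + (ra mod (3*W) + rb mod (3*W)) = (3*W)*(tc+td) + (rc mod (3*W) + rd mod (3*W))"
      using s da(1) db(1) dc(1) dd(1) by (simp add: algebra_simps)
    moreover have "ra mod (3*W) + rb mod (3*W) < 3*W" using da(2) db(2) by linarith
    moreover have "rc mod (3*W) + rd mod (3*W) < 3*W" using dc(2) dd(2) by linarith
    ultimately have "ta + tb = tc + td" using divmod_unique2 by blast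
    then have "{ta, tb} = {tc, td}" using sT ta(1) tb(1) tc(1) td(1) HT unfolding sidon_def by blast
    then have "g ` {ta, tb} = g ` {tc, td}" by simp
    then show "{a, b} = {c, d}" using ta(2) tb(2) tc(2) td(2) by simp
  qed
  show ?thesis
    by (rule exI[of _ "g ` HH l u"]) (use sub sid card_image[OF inj] in auto)
qed

lemma bin_sub: "t \<in> T \<Longrightarrow> bin t \<subseteq> {..<Q}"
  using bin_lt by fastforce

lemma card_bin: "card (bin t) = W"
  unfolding bin_def by simp

lemma Qpos: "Q > 0" using Qp by (simp add: prime_gt_0_nat)

lemma shift_card:
  assumes B: "B \<subseteq> {..<Q}"
  shows "card {u\<in>{..<Q}. (c + u) mod Q \<in> B} = card B"
proof -
  define f where "f u = (c + u) mod Q" for u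
  have inj: "inj_on f {..<Q}"
  proof (rule inj_onI)
    fix x y assume xy: "x \<in> {..<Q}" "y \<in> {..<Q}" "f x = f y"
    then have "(int c + int x) mod int Q = (int c + int y) mod int Q"
      unfolding f_def by (metis of_nat_add zmod_int)
    then have "int Q dvd (int c + int x) - (int c + int y)" by (simp add: mod_eq_dvd_iff)
    then have "int Q dvd (int x - int y)" by simp
    then have "int x - int y = 0" by (rule small_dvd_zero) (use xy in auto)
    then show "x = y" by simp
  qed
  have im: "f ` {..<Q} = {..<Q}"
  proof (rule card_subset_eq)
    show "f ` {..<Q} \<subseteq> {..<Q}" unfolding f_def using Qpos by auto
    show "card (f ` {..<Q}) = card {..<Q}" using card_image[OF inj] .
  qed simp
  have "card {u\<in>{..<Q}. f u \<in> B} = card (f ` {u\<in>{..<Q}. f u \<in> B})"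
    by (rule card_image[symmetric]) (rule inj_on_subset[OF inj], auto)
  also have "f ` {u\<in>{..<Q}. f u \<in> B} = B"
  proof
    show "f ` {u\<in>{..<Q}. f u \<in> B} \<subseteq> B" by auto
    show "B \<subseteq> f ` {u\<in>{..<Q}. f u \<in> B}"
    proof
      fix x assume "x \<in> B"
      then have "x \<in> f ` {..<Q}" using im B by auto
      then obtain u where "u \<in> {..<Q}" "x = f u" by auto
      then show "x \<in> f ` {u\<in>{..<Q}. f u \<in> B}" using \<open>x \<in> B\<close> by auto
    qed
  qed
  finally show ?thesis unfolding f_def .
qed

lemma sum_u_single:
  assumes "t \<in> T"
  shows "(\<Sum>u\<in>{..<Q}. (of_bool (rr l u a \<in> bin t) :: real)) = real W"
proof -
  have "(\<Sum>u\<in>{..<Q}. (of_bool (rr l u a \<in> bin t) :: real)) = real (card ({..<Q} \<inter> {u. rr l u a \<in> bin t}))"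
    by simp
  also have "{..<Q} \<inter> {u. rr l u a \<in> bin t} = {u\<in>{..<Q}. (l*a + u) mod Q \<in> bin t}"
    unfolding rr_def by auto
  also have "card \<dots> = card (bin t)" by (rule shift_card[OF bin_sub[OF assms]])
  finally show ?thesis by (simp add: card_bin)
qed

lemma good_cond:
  assumes ab: "a \<in> A" "b \<in> A" and t: "rr l u a \<in> bin t" "rr l u b \<in> bin t" and tT: "t \<in> T"
  shows "(int l * (int b - int a)) mod int Q \<in> {0..<int W} \<union> {int Q - int W..<int Q}"
proof -
  define \<delta> where "\<delta> = int (rr l u b) - int (rr l u a)"
  have "\<delta> mod int Q = ((int l * int b + int u) mod int Q - (int l * int a + int u) mod int Q) mod int Q"
    unfolding \<delta>_def rr_def by (simp add: zmod_int)
  also have "\<dots> = ((int l * int b + int u) - (int l * int a + int u)) mod int Q"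
    by (rule mod_diff_eq)
  also have "(int l * int b + int u) - (int l * int a + int u) = int l * (int b - int a)"
    by (simp add: algebra_simps)
  finally have dm: "(int l * (int b - int a)) mod int Q = \<delta> mod int Q" by simp
  have h: "3*t*W \<le> rr l u a" "rr l u a < 3*t*W + W" "3*t*W \<le> rr l u b" "rr l u b < 3*t*W + W"
    using t unfolding bin_def by auto
  have dl: "\<delta> < int W" "- int W < \<delta>" unfolding \<delta>_def using h by linarith+
  have L1: "L \<ge> 1" using TL tT by force
  have "1*W \<le> (6*L)*W" by (rule mult_le_mono1) (use L1 in simp)
  then have "W \<le> 6*L*W" by (simp only: mult_1 mult.assoc)
  then have WQ: "W \<le> Q" using LW by linarith
  show ?thesis
  proof (cases "\<delta> \<ge> 0")
    case True
    then have "\<delta> mod int Q = \<delta>" using dl WQ by (intro mod_pos_pos_trivial) auto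
    then show ?thesis using dm True dl by auto
  next
    case False
    have "\<delta> mod int Q = \<delta> + int Q"
    proof -
      have "(\<delta> + int Q) mod int Q = \<delta> + int Q" using False dl WQ by (intro mod_pos_pos_trivial) auto
      then show ?thesis by simp
    qed
    then show ?thesis using dm False dl by auto
  qed
qed

lemma card_good:
  assumes ab: "a \<in> A" "b \<in> A" "a \<noteq> b"
  shows "card {l\<in>{1..<Q}. (int l * (int b - int a)) mod int Q \<in> {0..<int W} \<union> {int Q - int W..<int Q}} \<le> 2*W"
proof -
  define D where "D = {0..<int W} \<union> {int Q - int W..<int Q}"
  define d where "d = int b - int a"
  define G where "G = {l\<in>{1..<Q}. (int l * d) mod int Q \<in> D}"
  have dnz: "d \<noteq> 0" using ab(3) unfolding d_def by simp
  have "a < Q" "b < Q" using AQ ab by auto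
  then have dlt: "\<bar>d\<bar> < int Q" unfolding d_def abs_less_iff by linarith
  have inj: "inj_on (\<lambda>l. (int l * d) mod int Q) G"
  proof (rule inj_onI)
    fix x y assume xy: "x \<in> G" "y \<in> G" "(int x * d) mod int Q = (int y * d) mod int Q"
    then have "int Q dvd int x * d - int y * d" by (simp add: mod_eq_dvd_iff)
    then have "int Q dvd (int x - int y) * d" by (simp add: algebra_simps)
    moreover have "prime (int Q)" using Qp by simp
    ultimately have "int Q dvd (int x - int y) \<or> int Q dvd d" by (simp add: prime_dvd_mult_iff)
    then show "x = y"
    proof
      assume "int Q dvd d"
      then have "d = 0" by (rule small_dvd_zero) (use dlt in auto)
      then show ?thesis using dnz by simp
    next
      assume "int Q dvd (int x - int y)"
      then have "int x - int y = 0" by (rule small_dvd_zero) (use xy in \<open>auto simp: G_def\<close>)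
      then show ?thesis by simp
    qed
  qed
  have "card G \<le> card D"
    by (rule card_inj_on_le[OF inj]) (auto simp: G_def D_def)
  also have "card D \<le> card {0..<int W} + card {int Q - int W..<int Q}"
    unfolding D_def by (rule card_Un_le)
  also have "\<dots> = 2*W" by simp
  finally show ?thesis unfolding G_def D_def d_def .
qed

lemma pair_bound:
  assumes ab: "a \<in> A" "b \<in> A" "a \<noteq> b" and t: "t \<in> T"
  shows "(\<Sum>l\<in>{1..<Q}. \<Sum>u\<in>{..<Q}. (of_bool (rr l u a \<in> bin t) * of_bool (rr l u b \<in> bin t) :: real)) \<le> 2 * real W * real W"
proof -
  define G where "G = {l\<in>{1..<Q}. (int l * (int b - int a)) mod int Q \<in> {0..<int W} \<union> {int Q - int W..<int Q}}"
  have step: "(\<Sum>u\<in>{..<Q}. (of_bool (rr l u a \<in> bin t) * of_bool (rr l u b \<in> bin t) :: real))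
      \<le> of_bool (l \<in> G) * real W" if l: "l \<in> {1..<Q}" for l
  proof -
    have "(\<Sum>u\<in>{..<Q}. (of_bool (rr l u a \<in> bin t) * of_bool (rr l u b \<in> bin t) :: real))
        \<le> (\<Sum>u\<in>{..<Q}. of_bool (l \<in> G) * (of_bool (rr l u a \<in> bin t) :: real))"
    proof (rule sum_mono)
      fix u assume "u \<in> {..<Q}"
      show "(of_bool (rr l u a \<in> bin t) * of_bool (rr l u b \<in> bin t) :: real) \<le> of_bool (l \<in> G) * of_bool (rr l u a \<in> bin t)"
      proof (cases "rr l u a \<in> bin t \<and> rr l u b \<in> bin t")
        case True
        then have "l \<in> G" unfolding G_def using good_cond[OF ab(1,2) _ _ t] l by auto
        then show ?thesis using True by simp
      next
        case False
        then show ?thesis by auto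
      qed
    qed
    also have "\<dots> = of_bool (l \<in> G) * (\<Sum>u\<in>{..<Q}. (of_bool (rr l u a \<in> bin t) :: real))"
      by (simp only: sum_distrib_left)
    also have "\<dots> = of_bool (l \<in> G) * real W" using sum_u_single[OF t] by simp
    finally show ?thesis .
  qed
  have "(\<Sum>l\<in>{1..<Q}. \<Sum>u\<in>{..<Q}. (of_bool (rr l u a \<in> bin t) * of_bool (rr l u b \<in> bin t) :: real))
      \<le> (\<Sum>l\<in>{1..<Q}. of_bool (l \<in> G) * real W)"
    by (rule sum_mono) (rule step)
  also have "\<dots> = real (card G) * real W"
  proof -
    have "(\<Sum>l\<in>{1..<Q}. of_bool (l \<in> G) * real W) = (\<Sum>l\<in>{1..<Q}. (of_bool (l \<in> G) :: real)) * real W"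
      by (simp only: sum_distrib_right)
    also have "(\<Sum>l\<in>{1..<Q}. (of_bool (l \<in> G) :: real)) = real (card ({1..<Q} \<inter> {l. l \<in> G}))"
      by simp
    also have "{1..<Q} \<inter> {l. l \<in> G} = G" unfolding G_def by auto
    finally show ?thesis .
  qed
  also have "\<dots> \<le> real (2*W) * real W"
    using card_good[OF ab] unfolding G_def by (intro mult_right_mono) auto
  finally show ?thesis by simp
qed

lemma HH_sum: "real (card (HH l u)) = (\<Sum>t\<in>T. of_bool (\<exists>a\<in>A. rr l u a \<in> bin t))"
proof -
  have "(\<Sum>t\<in>T. (of_bool (\<exists>a\<in>A. rr l u a \<in> bin t) :: real)) = real (card (T \<inter> {t. \<exists>a\<in>A. rr l u a \<in> bin t}))"
    using finT by simp
  also have "T \<inter> {t. \<exists>a\<in>A. rr l u a \<in> bin t} = HH l u" unfolding HH_def by auto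
  finally show ?thesis by simp
qed

lemma count_t:
  assumes t: "t \<in> T"
  shows "2 * (\<Sum>l\<in>{1..<Q}. \<Sum>u\<in>{..<Q}. (of_bool (\<exists>a\<in>A. rr l u a \<in> bin t) :: real))
     \<ge> 2 * real (card A) * real (Q - 1) * real W - real (card A) * real (card A - 1) * (2 * real W * real W)"
proof -
  define f where "f l u a = (of_bool (rr l u a \<in> bin t) :: real)" for l u a
  have h0: "2 * (\<Sum>l\<in>{1..<Q}. \<Sum>u\<in>{..<Q}. (of_bool (\<exists>a\<in>A. rr l u a \<in> bin t) :: real))
      = (\<Sum>l\<in>{1..<Q}. \<Sum>u\<in>{..<Q}. 2 * (of_bool (\<exists>a\<in>A. rr l u a \<in> bin t) :: real))"
    by (simp only: sum_distrib_left)
  have h1: "(\<Sum>l\<in>{1..<Q}. \<Sum>u\<in>{..<Q}. 2 * (of_bool (\<exists>a\<in>A. rr l u a \<in> bin t) :: real))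
      \<ge> (\<Sum>l\<in>{1..<Q}. \<Sum>u\<in>{..<Q}. 2 * (\<Sum>a\<in>A. f l u a) - (\<Sum>a\<in>A. \<Sum>b\<in>A-{a}. f l u a * f l u b))"
    unfolding f_def by (intro sum_mono hit_ineq finA)
  have h2: "(\<Sum>l\<in>{1..<Q}. \<Sum>u\<in>{..<Q}. 2 * (\<Sum>a\<in>A. f l u a) - (\<Sum>a\<in>A. \<Sum>b\<in>A-{a}. f l u a * f l u b))
     = 2 * (\<Sum>l\<in>{1..<Q}. \<Sum>u\<in>{..<Q}. \<Sum>a\<in>A. f l u a) - (\<Sum>l\<in>{1..<Q}. \<Sum>u\<in>{..<Q}. \<Sum>a\<in>A. \<Sum>b\<in>A-{a}. f l u a * f l u b)"
    by (simp add: sum_subtractf sum_distrib_left)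
  have "(\<Sum>l\<in>{1..<Q}. \<Sum>u\<in>{..<Q}. \<Sum>a\<in>A. f l u a) = (\<Sum>a\<in>A. \<Sum>l\<in>{1..<Q}. \<Sum>u\<in>{..<Q}. f l u a)"
    by (rule swap3)
  also have "\<dots> = (\<Sum>a\<in>A. \<Sum>l\<in>{1..<Q}. real W)"
    unfolding f_def by (intro sum.cong refl sum_u_single[OF t])
  also have "\<dots> = real (card A) * real (Q - 1) * real W" by simp
  finally have h3: "(\<Sum>l\<in>{1..<Q}. \<Sum>u\<in>{..<Q}. \<Sum>a\<in>A. f l u a) = real (card A) * real (Q - 1) * real W" .
  have "(\<Sum>l\<in>{1..<Q}. \<Sum>u\<in>{..<Q}. \<Sum>a\<in>A. \<Sum>b\<in>A-{a}. f l u a * f l u b)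
      = (\<Sum>a\<in>A. \<Sum>b\<in>A-{a}. \<Sum>l\<in>{1..<Q}. \<Sum>u\<in>{..<Q}. f l u a * f l u b)"
    by (rule swap4)
  also have "\<dots> \<le> (\<Sum>a\<in>A. \<Sum>b\<in>A-{a}. 2 * real W * real W)"
  proof (intro sum_mono)
    fix a b assume "a \<in> A" "b \<in> A - {a}"
    then show "(\<Sum>l\<in>{1..<Q}. \<Sum>u\<in>{..<Q}. f l u a * f l u b) \<le> 2 * real W * real W"
      unfolding f_def using pair_bound[OF _ _ _ t, of a b] by auto
  qed
  also have "\<dots> = real (card A) * real (card A - 1) * (2 * real W * real W)"
    using finA by (simp add: card_Diff_singleton mult_ac)
  finally have h4: "(\<Sum>l\<in>{1..<Q}. \<Sum>u\<in>{..<Q}. \<Sum>a\<in>A. \<Sum>b\<in>A-{a}. f l u a * f l u b) \<le> real (card A) * real (card A - 1) * (2 * real W * real W)" .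
  show ?thesis using h0 h1 h2 h3 h4 by linarith
qed

lemma count_total:
  "2 * (\<Sum>l\<in>{1..<Q}. \<Sum>u\<in>{..<Q}. real (card (HH l u)))
     \<ge> real (card T) * (2 * real (card A) * real (Q - 1) * real W - real (card A) * real (card A - 1) * (2 * real W * real W))"
proof -
  have "(\<Sum>l\<in>{1..<Q}. \<Sum>u\<in>{..<Q}. real (card (HH l u)))
      = (\<Sum>l\<in>{1..<Q}. \<Sum>u\<in>{..<Q}. \<Sum>t\<in>T. (of_bool (\<exists>a\<in>A. rr l u a \<in> bin t) :: real))"
    by (simp only: HH_sum)
  also have "\<dots> = (\<Sum>t\<in>T. \<Sum>l\<in>{1..<Q}. \<Sum>u\<in>{..<Q}. (of_bool (\<exists>a\<in>A. rr l u a \<in> bin t) :: real))"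
    by (rule swap3)
  finally have e: "2 * (\<Sum>l\<in>{1..<Q}. \<Sum>u\<in>{..<Q}. real (card (HH l u)))
     = (\<Sum>t\<in>T. 2 * (\<Sum>l\<in>{1..<Q}. \<Sum>u\<in>{..<Q}. (of_bool (\<exists>a\<in>A. rr l u a \<in> bin t) :: real)))"
    by (simp add: sum_distrib_left)
  have "(\<Sum>t\<in>T. 2 * (\<Sum>l\<in>{1..<Q}. \<Sum>u\<in>{..<Q}. (of_bool (\<exists>a\<in>A. rr l u a \<in> bin t) :: real)))
     \<ge> (\<Sum>t\<in>T. 2 * real (card A) * real (Q - 1) * real W - real (card A) * real (card A - 1) * (2 * real W * real W))"
    by (rule sum_mono) (rule count_t)
  then show ?thesis using e by simp
qed

lemma kss_step:
  assumes m1: "card A \<ge> 1" and W2: "2*card A*W \<le> Q - 1" and W4: "Q \<le> 4*card A*W" and Q2: "Q \<ge> 2"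
  shows "\<exists>B\<subseteq>A. sidon B \<and> card T \<le> 8 * card B"
proof -
  define m where "m = real (card A)"
  define x where "x = m * real W"
  define q where "q = real Q"
  define K where "K = real (card T)"
  have q2: "q \<ge> 2" using Q2 unfolding q_def by simp
  have Qm1: "real (Q - 1) = q - 1" using Q2 unfolding q_def by (simp add: of_nat_diff)
  have x1: "2 * x \<le> q - 1" using W2 Q2 unfolding x_def m_def q_def
    by (metis Qm1 of_nat_le_iff of_nat_mult of_nat_numeral mult.assoc q_def)
  have x2: "q \<le> 4 * x" using W4 unfolding x_def m_def q_def
    by (metis of_nat_le_iff of_nat_mult of_nat_numeral mult.assoc)
  have K0: "K \<ge> 0" unfolding K_def by simp
  have "real (card A) * real (card A - 1) \<le> m * m" unfolding m_def using m1 by (simp add: of_nat_diff)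
  then have "real (card A) * real (card A - 1) * (2 * real W * real W) \<le> m * m * (2 * real W * real W)"
    by (intro mult_right_mono) auto
  then have b: "2 * real (card A) * real (Q - 1) * real W - real (card A) * real (card A - 1) * (2 * real W * real W)
      \<ge> 2 * x * (q - 1 - x)"
    unfolding x_def Qm1 by (simp add: m_def algebra_simps)
  have "x * (q - 1 - x) \<ge> (q / 4) * ((q - 1) / 2)"
    by (rule mult_mono) (use x1 x2 q2 in auto)
  then have b2: "2 * x * (q - 1 - x) \<ge> q * (q - 1) / 4" by simp
  have tot: "2 * (\<Sum>l\<in>{1..<Q}. \<Sum>u\<in>{..<Q}. real (card (HH l u))) \<ge> K * (q * (q - 1) / 4)"
  proof -
    have "K * (q * (q - 1) / 4) \<le> K * (2 * real (card A) * real (Q - 1) * real W - real (card A) * real (card A - 1) * (2 * real W * real W))"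
      using b b2 K0 by (intro mult_left_mono) auto
    then show ?thesis using count_total unfolding K_def by linarith
  qed
  have "\<exists>l\<in>{1..<Q}. \<exists>u\<in>{..<Q}. K \<le> 8 * real (card (HH l u))"
  proof (rule ccontr)
    assume "\<not> ?thesis"
    then have lt: "\<forall>l\<in>{1..<Q}. \<forall>u\<in>{..<Q}. 8 * real (card (HH l u)) < K" by (simp add: not_le)
    have "(\<Sum>l\<in>{1..<Q}. \<Sum>u\<in>{..<Q}. real (card (HH l u))) < (\<Sum>l\<in>{1..<Q}. \<Sum>u\<in>{..<Q}. K / 8)"
    proof (rule sum_strict_mono)
      show "finite {1..<Q}" by simp
      show "{1..<Q} \<noteq> {}" using Q2 by simp
      fix l assume l: "l \<in> {1..<Q}"
      show "(\<Sum>u\<in>{..<Q}. real (card (HH l u))) < (\<Sum>u\<in>{..<Q}. K / 8)"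
      proof (rule sum_strict_mono)
        show "finite {..<Q}" by simp
        have "0 \<in> {..<Q}" using Q2 by simp
        then show "{..<Q} \<noteq> {}" by blast
        fix u assume "u \<in> {..<Q}"
        then have "8 * real (card (HH l u)) < K" using lt l by blast
        then show "real (card (HH l u)) < K / 8" by simp
      qed
    qed
    also have "\<dots> = (q - 1) * q * K / 8" unfolding q_def using Q2 by (simp add: of_nat_diff)
    finally have "2 * (\<Sum>l\<in>{1..<Q}. \<Sum>u\<in>{..<Q}. real (card (HH l u))) < K * (q * (q - 1) / 4)"
      by (simp add: algebra_simps)
    then show False using tot by linarith
  qed
  then obtain l u where lu: "K \<le> 8 * real (card (HH l u))" by blast
  obtain B where B: "B \<subseteq> A" "sidon B" "card B = card (HH l u)" using select by blast
  show ?thesis using B lu unfolding K_def by (intro exI[of _ B]) auto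
qed

end

lemma sidon_single: "sidon {a}"
  unfolding sidon_def by auto

lemma kss: "\<exists>D::nat. D \<ge> 1 \<and> (\<forall>A::nat set. finite A \<longrightarrow> A \<noteq> {} \<longrightarrow> (\<exists>B\<subseteq>A. sidon B \<and> card A \<le> D * (card B)^2))"
proof -
  obtain C :: nat where C: "C \<ge> 1" "\<forall>x\<ge>1. \<exists>p. prime p \<and> x \<le> p \<and> p \<le> C*x"
    using prime_in_range by blast
  define M0 where "M0 = 6*C*C*16"
  define D where "D = 1536*C*C + M0"
  show ?thesis
  proof (rule exI[of _ D], intro conjI allI impI)
    show "D \<ge> 1" unfolding D_def M0_def using C by simp
    fix A :: "nat set" assume finA: "finite A" and ne: "A \<noteq> {}"
    define m where "m = card A"
    have m1: "m \<ge> 1" unfolding m_def using finA ne by (simp add: Suc_le_eq card_gt_0_iff)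
    show "\<exists>B\<subseteq>A. sidon B \<and> card A \<le> D * (card B)^2"
    proof (cases "m < M0")
      case True
      obtain a where a: "a \<in> A" using ne by blast
      have "card A \<le> D * (card {a})^2" using True unfolding m_def D_def by simp
      then show ?thesis using a sidon_single[of a] by blast
    next
      case False
      then have mM0: "M0 \<le> m" by simp
      define S where "S = {x::nat. 6*C*C*(x*x) \<le> m}"
      have Sb: "S \<subseteq> {..m}"
      proof
        fix x assume "x \<in> S"
        then have h: "6*C*C*(x*x) \<le> m" unfolding S_def by simp
        have a1: "x \<le> x*x" by (cases x) auto
        have a2: "x*x \<le> (6*C*C)*(x*x)" using mult_le_mono1[of 1 "6*C*C" "x*x"] C by simp
        have "x \<le> m" using le_trans[OF a1 le_trans[OF a2 h]] .
        then show "x \<in> {..m}" by simp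
      qed
      have finS: "finite S" using Sb finite_subset by blast
      have S4: "4 \<in> S" unfolding S_def using mM0 unfolding M0_def by simp
      define x where "x = Max S"
      have xS: "x \<in> S" unfolding x_def using Max_in[OF finS] S4 by blast
      have x4: "x \<ge> 4" unfolding x_def using Max_ge[OF finS S4] .
      have xm: "6*C*C*(x*x) \<le> m" using xS unfolding S_def by simp
      have xm2: "m < 6*C*C*((x+1)*(x+1))"
      proof (rule ccontr)
        assume "\<not> ?thesis"
        then have "x + 1 \<in> S" unfolding S_def by simp
        then have "x + 1 \<le> x" unfolding x_def using Max_ge[OF finS] by blast
        then show False by simp
      qed
      have "x \<ge> 1" using x4 by simp
      then obtain p where p: "prime p" "x \<le> p" "p \<le> C*x" using C(2) by blast
      have p2: "p > 2" using p x4 by simp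
      have pCx: "p*p \<le> (C*x)*(C*x)" using p(3) by (intro mult_le_mono) auto
      have p6: "6*(p*p) \<le> m"
      proof -
        have "6*(p*p) \<le> 6*((C*x)*(C*x))" using pCx by simp
        also have "\<dots> = 6*C*C*(x*x)" by (simp add: mult_ac)
        finally show ?thesis using xm by linarith
      qed
      define T where "T = ET p"
      define L where "L = 2*p*p"
      have sT: "sidon T" unfolding T_def by (rule et_sidon[OF p(1) p2])
      have cT: "card T = p" unfolding T_def by (rule et_card) (use p2 in simp)
      have TL: "\<forall>t\<in>T. t < L" unfolding T_def L_def using et_bound by blast
      have finT: "finite T" unfolding T_def ET_def by simp
      obtain Q where Q: "prime Q" "Q > 4*m + Max A" using bigger_prime by blast
      have AQ: "\<forall>a\<in>A. a < Q"
      proof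
        fix a assume "a \<in> A"
        then have "a \<le> Max A" by (rule Max_ge[OF finA])
        then show "a < Q" using Q(2) by linarith
      qed
      define W where "W = (Q - 1) div (2*m)"
      have Q4: "4*m \<le> Q - 1" using Q(2) by simp
      have W2: "2*m*W \<le> Q - 1" using div_times_less_eq_dividend[of "Q-1" "2*m"] unfolding W_def by (simp add: mult_ac)
      have "(2*m) div (2*m) \<le> (Q-1) div (2*m)" by (rule div_le_mono) (use Q4 in simp)
      then have W1: "W \<ge> 1" unfolding W_def using m1 by simp
      have W4: "Q \<le> 4*m*W"
      proof -
        have "Q - 1 < 2*m + (Q - 1) div (2*m) * (2*m)" by (rule dividend_less_div_times) (use m1 in simp)
        then have "Q - 1 < 2*m*(W+1)" unfolding W_def by (simp add: algebra_simps)
        then have "Q \<le> 2*m*W + 2*m" by (simp add: algebra_simps)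
        moreover have "2*m*1 \<le> 2*m*W" using W1 by (rule mult_le_mono2)
        moreover have "4*m*W = 2*m*W + 2*m*W" by simp
        ultimately show ?thesis by linarith
      qed
      have LW: "6*L*W \<le> Q"
      proof -
        have "6*L*W = 2*(6*(p*p))*W" unfolding L_def by (simp add: mult_ac)
        also have "\<dots> \<le> 2*m*W" using p6 by (intro mult_le_mono) auto
        finally show ?thesis using W2 by linarith
      qed
      have Q2: "Q \<ge> 2" using Q(2) m1 by simp
      obtain B where B: "B \<subseteq> A" "sidon B" "card T \<le> 8 * card B"
        using kss_step[OF finA finT sT TL Q(1) AQ W1 LW, folded m_def, OF m1 W2 W4 Q2] by blast
      have "m < 6*C*C*((x+1)*(x+1))" by (rule xm2)
      also have "(x+1)*(x+1) \<le> (2*x)*(2*x)" using x4 by (intro mult_le_mono) auto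
      then have "6*C*C*((x+1)*(x+1)) \<le> 6*C*C*((2*x)*(2*x))" by (rule mult_le_mono2)
      also have "(2*x)*(2*x) \<le> (2*p)*(2*p)" using p(2) by (intro mult_le_mono) auto
      then have "6*C*C*((2*x)*(2*x)) \<le> 6*C*C*((2*p)*(2*p))" by (rule mult_le_mono2)
      also have h16: "2*p \<le> 16*card B" using B(3) cT by simp
      have "(2*p)*(2*p) \<le> (16*card B)*(16*card B)" by (rule mult_le_mono[OF h16 h16])
      then have "6*C*C*((2*p)*(2*p)) \<le> 6*C*C*((16*card B)*(16*card B))" by (rule mult_le_mono2)
      also have "6*C*C*((16*card B)*(16*card B)) = 1536*C*C*(card B)^2" by (simp add: power2_eq_square)
      also have "\<dots> \<le> D * (card B)^2" unfolding D_def by simp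
      finally show ?thesis using B unfolding m_def by auto
    qed
  qed
qed

definition geo :: "nat set \<Rightarrow> nat \<Rightarrow> nat set" where
  "geo x t = (x - {..<t}) \<union> ({..<t} - x)"

lemma geo_diff: "(geo x s - geo x t) \<union> (geo x t - geo x s) = ({..<s} - {..<t}) \<union> ({..<t} - {..<s})"
  unfolding geo_def by blast

lemma hamming_geo: "hamming (geo x s) (geo x t) = (if s \<le> t then t - s else s - t)"
proof -
  have "hamming (geo x s) (geo x t) = card (({..<s} - {..<t}) \<union> ({..<t} - {..<s}))"
    unfolding hamming_def geo_diff ..
  also have "card (({..<s} - {..<t}) \<union> ({..<t} - {..<s})) = (if s \<le> t then t - s else s - t)"
  proof (cases "s \<le> t")
    case True
    then have "({..<s} - {..<t}) \<union> ({..<t} - {..<s}) = {s..<t}" by auto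
    then show ?thesis using True by simp
  next
    case False
    then have "({..<s} - {..<t}) \<union> ({..<t} - {..<s}) = {t..<s}" by auto
    then show ?thesis using False by simp
  qed
  finally show ?thesis .
qed

lemma geo_cube: "x \<in> cube n \<Longrightarrow> t \<le> n \<Longrightarrow> geo x t \<in> cube n"
  unfolding cube_def geo_def by auto

lemma geo_geo: "geo (geo x t) t = x"
  unfolding geo_def by blast

lemma geo_inj:
  assumes "geo x s = geo x t" shows "s = t"
proof -
  have "hamming (geo x s) (geo x t) = 0" using assms unfolding hamming_def by simp
  then show ?thesis using hamming_geo[of x s t] by (simp split: if_splits)
qed

lemma card_cube: "card (cube n) = 2^n"
  unfolding cube_def by (simp add: card_Pow)

lemma fin_cube: "finite (cube n)"
  unfolding cube_def by simp

lemma geo_count: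
  assumes S: "S \<subseteq> cube n" and t: "t \<le> n"
  shows "card {x\<in>cube n. geo x t \<in> S} = card S"
proof -
  have inj: "inj_on (\<lambda>x. geo x t) {x\<in>cube n. geo x t \<in> S}"
  proof (rule inj_onI)
    fix a b assume "a \<in> {x\<in>cube n. geo x t \<in> S}" "b \<in> {x\<in>cube n. geo x t \<in> S}" "geo a t = geo b t"
    then have "geo (geo a t) t = geo (geo b t) t" by simp
    then show "a = b" by (simp only: geo_geo)
  qed
  have "(\<lambda>x. geo x t) ` {x\<in>cube n. geo x t \<in> S} = S"
  proof
    show "(\<lambda>x. geo x t) ` {x\<in>cube n. geo x t \<in> S} \<subseteq> S" by auto
    show "S \<subseteq> (\<lambda>x. geo x t) ` {x\<in>cube n. geo x t \<in> S}"
    proof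
      fix s assume s: "s \<in> S"
      have "geo s t \<in> cube n" using geo_cube[OF _ t] s S by auto
      moreover have "geo (geo s t) t = s" by (rule geo_geo)
      ultimately show "s \<in> (\<lambda>x. geo x t) ` {x\<in>cube n. geo x t \<in> S}"
        using s by (intro image_eqI[of _ _ "geo s t"]) auto
    qed
  qed
  then show ?thesis using card_image[OF inj] by simp
qed

lemma good_base:
  assumes S: "S \<subseteq> cube n"
  shows "\<exists>x\<in>cube n. (n+1) * card S \<le> 2^n * card {t\<in>{..n}. geo x t \<in> S}"
proof -
  have "(\<Sum>x\<in>cube n. card {t\<in>{..n}. geo x t \<in> S}) = (\<Sum>x\<in>cube n. \<Sum>t\<in>{..n}. if geo x t \<in> S then 1 else 0)"
    by (intro sum.cong refl card_filter_sum) simp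
  also have "\<dots> = (\<Sum>t\<in>{..n}. \<Sum>x\<in>cube n. if geo x t \<in> S then 1 else 0)" by (rule sum.swap)
  also have "\<dots> = (\<Sum>t\<in>{..n}. card {x\<in>cube n. geo x t \<in> S})"
    by (intro sum.cong refl card_filter_sum[symmetric] fin_cube)
  also have "\<dots> = (\<Sum>t\<in>{..n}. card S)" using geo_count[OF S] by simp
  also have "\<dots> = (n+1) * card S" by simp
  finally have tot: "(\<Sum>x\<in>cube n. card {t\<in>{..n}. geo x t \<in> S}) = (n+1) * card S" .
  show ?thesis
  proof (rule ccontr)
    assume "\<not> ?thesis"
    then have lt: "\<forall>x\<in>cube n. 2^n * card {t\<in>{..n}. geo x t \<in> S} < (n+1) * card S" by (simp add: not_le)
    have ne: "cube n \<noteq> {}" unfolding cube_def by auto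
    have "2^n * (\<Sum>x\<in>cube n. card {t\<in>{..n}. geo x t \<in> S}) = (\<Sum>x\<in>cube n. 2^n * card {t\<in>{..n}. geo x t \<in> S})"
      by (simp add: sum_distrib_left)
    also have "\<dots> < (\<Sum>x\<in>cube n. (n+1) * card S)"
      by (rule sum_strict_mono[OF fin_cube ne]) (use lt in blast)
    also have "\<dots> = 2^n * ((n+1) * card S)" by (simp add: card_cube)
    finally show False using tot by simp
  qed
qed

lemma sidon_diff:
  assumes sB: "sidon B" and in4: "s \<in> B" "t \<in> B" "s' \<in> B" "t' \<in> B"
    and ne: "s \<noteq> t" "s' \<noteq> t'"
    and eq: "(if s \<le> t then t - s else s - t) = (if s' \<le> t' then t' - s' else s' - t')"
  shows "{s, t} = {s', t'}"
proof -
  have sid: "\<And>a b c d. a \<in> B \<Longrightarrow> b \<in> B \<Longrightarrow> c \<in> B \<Longrightarrow> d \<in> B \<Longrightarrow> a + b = c + d \<Longrightarrow> {a,b} = {c,d}"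
    using sB unfolding sidon_def by blast
  consider "s < t" "s' < t'" | "s < t" "t' < s'" | "t < s" "s' < t'" | "t < s" "t' < s'"
    using ne by linarith
  then show ?thesis
  proof cases
    case 1
    then have "t + s' = t' + s" using eq by auto
    then have "{t, s'} = {t', s}" using sid in4 by blast
    then show ?thesis using 1 by (auto simp: doubleton_eq_iff)
  next
    case 2
    then have "t + t' = s' + s" using eq by auto
    then have "{t, t'} = {s', s}" using sid in4 by blast
    then show ?thesis using 2 by (auto simp: doubleton_eq_iff)
  next
    case 3
    then have "s + s' = t' + t" using eq by auto
    then have "{s, s'} = {t', t}" using sid in4 by blast
    then show ?thesis using 3 by (auto simp: doubleton_eq_iff)
  next
    case 4
    then have "s + t' = s' + t" using eq by auto
    then have "{s, t'} = {s', t}" using sid in4 by blast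
    then show ?thesis using 4 by (auto simp: doubleton_eq_iff)
  qed
qed

lemma rainbow_geo:
  assumes "sidon B"
  shows "rainbow (geo x ` B)"
  unfolding rainbow_def
proof (intro ballI impI)
  fix u v u' v' assume uv: "u \<in> geo x ` B" "v \<in> geo x ` B" "u' \<in> geo x ` B" "v' \<in> geo x ` B"
    and ne: "u \<noteq> v" "u' \<noteq> v'" and h: "hamming u v = hamming u' v'"
  obtain s where s: "s \<in> B" "u = geo x s" using uv(1) by auto
  obtain t where t: "t \<in> B" "v = geo x t" using uv(2) by auto
  obtain s' where s': "s' \<in> B" "u' = geo x s'" using uv(3) by auto
  obtain t' where t': "t' \<in> B" "v' = geo x t'" using uv(4) by auto
  have "s \<noteq> t" "s' \<noteq> t'" using ne s t s' t' by auto
  moreover have "(if s \<le> t then t - s else s - t) = (if s' \<le> t' then t' - s' else s' - t')"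
    using h s t s' t' by (simp add: hamming_geo)
  ultimately have "{s, t} = {s', t'}" using sidon_diff[OF assms s(1) t(1) s'(1) t'(1)] by blast
  then have "geo x ` {s, t} = geo x ` {s', t'}" by simp
  then show "{u, v} = {u', v'}" using s t s' t' by simp
qed

lemma rho_ge:
  assumes S: "S \<subseteq> cube n" and R: "R \<subseteq> S" "rainbow R"
  shows "card R \<le> rho S"
proof -
  have finS: "finite S" using S fin_cube finite_subset by blast
  have "{card R | R. R \<subseteq> S \<and> rainbow R} \<subseteq> {..card S}"
    using card_mono[OF finS] by auto
  then have fin: "finite {card R | R. R \<subseteq> S \<and> rainbow R}" using finite_subset by blast
  have "card R \<in> {card R | R. R \<subseteq> S \<and> rainbow R}" using R by blast
  then show ?thesis unfolding rho_def by (rule Max_ge[OF fin])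
qed

theorem theorem1p6:
  shows "\<exists>c::real. c > 0 \<and>
    (\<forall>(n::nat) (\<alpha>::real) S. 0 \<le> \<alpha> \<longrightarrow> \<alpha> \<le> 1 \<longrightarrow> S \<subseteq> cube n \<longrightarrow>
       real (card S) \<ge> \<alpha> * 2 ^ n \<longrightarrow>
       real (rho S) \<ge> c * sqrt \<alpha> * sqrt (real n))"
proof -
  obtain D :: nat where D: "D \<ge> 1" "\<forall>A::nat set. finite A \<longrightarrow> A \<noteq> {} \<longrightarrow> (\<exists>B\<subseteq>A. sidon B \<and> card A \<le> D * (card B)^2)"
    using kss by blast
  show ?thesis
  proof (rule exI[of _ "1 / sqrt (real D)"], intro conjI allI impI)
    show "1 / sqrt (real D) > 0" using D(1) by simp
    fix n :: nat and \<alpha> :: real and S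
    assume a0: "0 \<le> \<alpha>" and a1: "\<alpha> \<le> 1" and S: "S \<subseteq> cube n" and cS: "real (card S) \<ge> \<alpha> * 2 ^ n"
    show "real (rho S) \<ge> 1 / sqrt (real D) * sqrt \<alpha> * sqrt (real n)"
    proof (cases "\<alpha> = 0")
      case True
      then show ?thesis by simp
    next
      case False
      then have apos: "\<alpha> > 0" using a0 by simp
      obtain x where x: "x \<in> cube n" "(n+1) * card S \<le> 2^n * card {t\<in>{..n}. geo x t \<in> S}"
        using good_base[OF S] by blast
      define A where "A = {t\<in>{..n}. geo x t \<in> S}"
      have finA: "finite A" unfolding A_def by simp
      have h: "real ((n+1) * card S) \<le> real (2^n * card A)"
        using x(2) unfolding A_def of_nat_le_iff .
      have "real (n+1) * real (card S) \<le> 2^n * real (card A)"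
        using h by (simp only: of_nat_mult of_nat_power of_nat_numeral)
      moreover have "real (n+1) * (\<alpha> * 2^n) \<le> real (n+1) * real (card S)"
        using cS by (intro mult_left_mono) auto
      moreover have "2^n * (real (n+1) * \<alpha>) = real (n+1) * (\<alpha> * 2^n)" by (simp add: mult_ac)
      ultimately have "2^n * (real (n+1) * \<alpha>) \<le> 2^n * real (card A)" by linarith
      then have cA: "real (n+1) * \<alpha> \<le> real (card A)" by simp
      then have "real (card A) > 0" using apos by (intro less_le_trans[OF _ cA]) simp
      then have Ane: "A \<noteq> {}" by auto
      obtain B where B: "B \<subseteq> A" "sidon B" "card A \<le> D * (card B)^2" using D(2) finA Ane by blast
      have cB: "\<alpha> * real n / real D \<le> (real (card B))^2"
      proof -
        have "\<alpha> * real n \<le> real (card A)" using cA a0 by (simp add: algebra_simps)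
        also have "\<dots> \<le> real D * (real (card B))^2"
        proof -
          have "real (card A) \<le> real (D * (card B)^2)" using B(3) unfolding of_nat_le_iff .
          then show ?thesis by (simp only: of_nat_mult of_nat_power)
        qed
        finally show ?thesis using D(1) by (simp add: divide_le_eq mult_ac)
      qed
      have "1 / sqrt (real D) * sqrt \<alpha> * sqrt (real n) = sqrt (\<alpha> * real n / real D)"
        by (simp add: real_sqrt_mult real_sqrt_divide)
      also have "\<dots> \<le> sqrt ((real (card B))^2)" using cB by (rule real_sqrt_le_mono)
      also have "\<dots> = real (card B)" by simp
      also have "card B = card (geo x ` B)"
        by (rule card_image[symmetric]) (rule inj_onI, erule geo_inj)
      also have "card (geo x ` B) \<le> rho S"
      proof (rule rho_ge[OF S])
        show "geo x ` B \<subseteq> S" using B(1) unfolding A_def by auto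
        show "rainbow (geo x ` B)" by (rule rainbow_geo[OF B(2)])
      qed
      finally show ?thesis by simp
    qed
  qed
qed

end
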